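(* Let $\mathcal{A}$ be a complex Banach algebra with identity, $\lambda$ a nonzero complex number, and $M = \begin{pmatrix} A & B \\ C & D \end{pmatrix} \in M_2(\mathcal{A})$ with $A, D \in \mathcal{A}^d$. If $$AB = \lambda A^\pi B D,\quad DC = \lambda D^\pi C A,\quad BC = 0,$$ then $M \in M_2(\mathcal{A})^d$ and $$M^d = \begin{pmatrix} A^d & 0 \\ 0 & D^d \end{pmatrix} + \sum_{n=0}^{\infty} M^n \begin{pmatrix} 0 & B(D^d)^{n+2} \\ C(A^d)^{n+2} & 0 \end{pmatrix}.$$
   Context: $M_2(\mathcal{A})$ is the Banach algebra of $2\times 2$ matrices over $\mathcal{A}$. An element $x$ of a Banach algebra has a generalized Drazin (g-Drazin) inverse $x^d$ if $x^d$ commutes with $x$, $x^d = x^dxx^d$ and $x - x^2x^d$ is quasinilpotent (i.e. $\lim\|y^n\|^{1/n}=0$ for $y=x-x^2x^d$); $\mathcal{A}^d$ (resp. $M_2(\mathcal{A})^d$) denotes the set of g-Drazin invertible elements. The spectral idempotent is $x^\pi = 1 - xx^d$. $M^0$ is the identity matrix. *)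

theory Defs
  imports "HOL-Analysis.Analysis"
begin

class complex_banach_algebra_1 = banach + real_normed_algebra_1 +
  fixes scaleC :: "complex \<Rightarrow> 'a \<Rightarrow> 'a"
  assumes scaleC_of_real: "scaleC (complex_of_real r) x = scaleR r x"
    and scaleC_add_right: "scaleC a (x + y) = scaleC a x + scaleC a y"
    and scaleC_add_left: "scaleC (a + b) x = scaleC a x + scaleC b x"
    and scaleC_scaleC: "scaleC a (scaleC b x) = scaleC (a * b) x"
    and scaleC_one: "scaleC 1 x = x"
    and norm_scaleC: "norm (scaleC a x) = cmod a * norm x"
    and mult_scaleC_left: "scaleC a x * y = scaleC a (x * y)"
    and mult_scaleC_right: "x * scaleC a y = scaleC a (x * y)"

definition quasinilpotent :: "'a::real_normed_algebra_1 \<Rightarrow> bool" where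
  "quasinilpotent y \<longleftrightarrow> (\<lambda>n. root n (norm (y ^ n))) \<longlonglongrightarrow> 0"

definition is_gdrazin :: "'a::real_normed_algebra_1 \<Rightarrow> 'a \<Rightarrow> bool" where
  "is_gdrazin x xd \<longleftrightarrow> xd * x = x * xd \<and> xd = xd * x * xd \<and> quasinilpotent (x - x\<^sup>2 * xd)"

definition spec_idem :: "'a::real_normed_algebra_1 \<Rightarrow> 'a \<Rightarrow> 'a" where
  "spec_idem x xd = 1 - x * xd"

datatype 'a m2 = M2 (e11: 'a) (e12: 'a) (e21: 'a) (e22: 'a)

fun m2_mult :: "'a::ring m2 \<Rightarrow> 'a m2 \<Rightarrow> 'a m2" where
  "m2_mult (M2 a b c d) (M2 a' b' c' d') =
     M2 (a * a' + b * c') (a * b' + b * d') (c * a' + d * c') (c * b' + d * d')"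

fun m2_add :: "'a::ab_group_add m2 \<Rightarrow> 'a m2 \<Rightarrow> 'a m2" where
  "m2_add (M2 a b c d) (M2 a' b' c' d') = M2 (a + a') (b + b') (c + c') (d + d')"

fun m2_diff :: "'a::ab_group_add m2 \<Rightarrow> 'a m2 \<Rightarrow> 'a m2" where
  "m2_diff (M2 a b c d) (M2 a' b' c' d') = M2 (a - a') (b - b') (c - c') (d - d')"

definition m2_one :: "'a::ring_1 m2" where
  "m2_one = M2 1 0 0 1"

primrec m2_pow :: "'a::ring_1 m2 \<Rightarrow> nat \<Rightarrow> 'a m2" where
  "m2_pow X 0 = m2_one"
| "m2_pow X (Suc n) = m2_mult (m2_pow X n) X"

text \<open>A norm on M_2(A) (all algebra norms on M_2(A) are equivalent, and
  quasinilpotence / convergence do not depend on the choice).\<close>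
fun m2_norm :: "'a::real_normed_vector m2 \<Rightarrow> real" where
  "m2_norm (M2 a b c d) = norm a + norm b + norm c + norm d"

definition m2_quasinilpotent :: "'a::real_normed_algebra_1 m2 \<Rightarrow> bool" where
  "m2_quasinilpotent Y \<longleftrightarrow> (\<lambda>n. root n (m2_norm (m2_pow Y n))) \<longlonglongrightarrow> 0"

definition m2_is_gdrazin :: "'a::real_normed_algebra_1 m2 \<Rightarrow> 'a m2 \<Rightarrow> bool" where
  "m2_is_gdrazin X Xd \<longleftrightarrow> m2_mult Xd X = m2_mult X Xd
     \<and> Xd = m2_mult (m2_mult Xd X) Xd
     \<and> m2_quasinilpotent (m2_diff X (m2_mult (m2_pow X 2) Xd))"

text \<open>Convergence of a series of matrices (in norm, equivalently entrywise).\<close>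
definition m2_sums :: "(nat \<Rightarrow> 'a::real_normed_vector m2) \<Rightarrow> 'a m2 \<Rightarrow> bool" where
  "m2_sums f S \<longleftrightarrow> (\<lambda>n. e11 (f n)) sums e11 S \<and> (\<lambda>n. e12 (f n)) sums e12 S
     \<and> (\<lambda>n. e21 (f n)) sums e21 S \<and> (\<lambda>n. e22 (f n)) sums e22 S"

end

theory Submission
  imports Defs
begin

lemma qn_bound:
  fixes a :: "'a::real_normed_algebra_1"
  assumes q: "quasinilpotent a" and e: "0 < e"
  shows "\<exists>c>0. \<forall>n. norm (a ^ n) \<le> c * e ^ n"
proof -
  have "eventually (\<lambda>n. root n (norm (a ^ n)) < e) sequentially"
    using q e unfolding quasinilpotent_def by (simp add: order_tendstoD(2))
  then obtain N0 where N0: "\<And>n. n \<ge> N0 \<Longrightarrow> root n (norm (a ^ n)) < e"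
    by (auto simp: eventually_sequentially)
  define c where "c = 1 + (\<Sum>m<N0+1. norm (a ^ m) / e ^ m)"
  have c0: "c > 0" unfolding c_def
    by (smt (verit) e sum_nonneg divide_nonneg_pos norm_ge_zero zero_less_power)
  have "norm (a ^ n) \<le> c * e ^ n" for n
  proof (cases "n \<le> N0")
    case True
    have "norm (a ^ n) / e ^ n \<le> (\<Sum>m<N0+1. norm (a ^ m) / e ^ m)"
      by (rule member_le_sum[where f="\<lambda>m. norm (a ^ m) / e ^ m"]) (use True e in auto)
    then have "norm (a ^ n) / e ^ n \<le> c" unfolding c_def by linarith
    then show ?thesis using e by (simp add: divide_le_eq)
  next
    case False
    then have n0: "n > 0" by simp
    have "root n (norm (a ^ n)) < root n (e ^ n)"
      using N0[of n] False e n0 by (simp add: real_root_pos2)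
    then have "norm (a ^ n) < e ^ n" using n0 real_root_less_iff by blast
    moreover have "e ^ n \<le> c * e ^ n" using c0 e unfolding c_def
      by (smt (verit) e sum_nonneg divide_nonneg_pos norm_ge_zero zero_less_power mult_le_cancel_right1)
    ultimately show ?thesis by linarith
  qed
  then show ?thesis using c0 by blast
qed

lemma geom_zero:
  fixes x K :: real
  assumes "\<And>n. x \<le> K * (1/2) ^ n"
  shows "x \<le> 0"
proof -
  have "(\<lambda>n. K * (1/2::real) ^ n) \<longlonglongrightarrow> 0"
    by (rule tendsto_mult_right_zero) (rule LIMSEQ_power_zero, simp)
  then show ?thesis using assms by (intro LIMSEQ_le_const) auto
qed

lemma root_crit:
  fixes f :: "nat \<Rightarrow> real"
  assumes f0: "\<And>n. f n \<ge> 0"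
    and b: "\<And>e. 0 < e \<Longrightarrow> e \<le> 1 \<Longrightarrow> \<exists>c>0. \<forall>n\<ge>2. f n \<le> c * real n ^ 2 * e ^ n"
  shows "(\<lambda>n. root n (f n)) \<longlonglongrightarrow> 0"
proof (rule LIMSEQ_I)
  fix r :: real assume r: "r > 0"
  define e where "e = min (r/3) 1"
  have e: "0 < e" "e \<le> 1" "2 * e < r" using r by (auto simp: e_def)
  obtain c where c: "c > 0" "\<And>n. n \<ge> 2 \<Longrightarrow> f n \<le> c * real n ^ 2 * e ^ n" using b[OF e(1,2)] by blast
  have "(\<lambda>n. root n c * root n (real n) ^ 2) \<longlonglongrightarrow> 1 * 1 ^ 2"
    by (intro tendsto_intros LIMSEQ_root_const LIMSEQ_root c)
  then have "eventually (\<lambda>n. root n c * root n (real n) ^ 2 < 2) sequentially"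
    by (intro order_tendstoD(2)) auto
  then obtain N1 where N1: "\<And>n. n \<ge> N1 \<Longrightarrow> root n c * root n (real n) ^ 2 < 2"
    by (auto simp: eventually_sequentially)
  show "\<exists>no. \<forall>n\<ge>no. norm (root n (f n) - 0) < r"
  proof (intro exI allI impI)
    fix n assume n: "n \<ge> max N1 2"
    then have n0: "0 < n" by simp
    have "root n (f n) \<le> root n (c * real n ^ 2 * e ^ n)"
      using c(2)[of n] n n0 by (simp add: real_root_le_iff)
    also have "\<dots> = root n c * root n (real n) ^ 2 * e"
      using n0 e c by (simp add: real_root_mult real_root_power real_root_pos2)
    also have "\<dots> < 2 * e" using N1[of n] n e by (simp add: mult_strict_right_mono)
    finally have "root n (f n) < r" using e by linarith
    moreover have "root n (f n) \<ge> 0" using f0[of n] by (simp add: real_root_ge_zero)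
    ultimately show "norm (root n (f n) - 0) < r" by simp
  qed
qed


lemma scaleC_zero_right[simp]: "scaleC a (0::'a::complex_banach_algebra_1) = 0"
  by (metis add_cancel_right_right scaleC_add_right)

lemma scaleC_zero_left[simp]: "scaleC 0 (x::'a::complex_banach_algebra_1) = 0"
  by (metis of_real_0 scaleC_of_real scale_zero_left)

lemma pow_qcomm:
  fixes a B d :: "'a::complex_banach_algebra_1"
  assumes "a*B = scaleC l (B*d)"
  shows "a^n*B = scaleC (l^n) (B*d^n)"
proof (induction n)
  case 0 then show ?case by (simp add: scaleC_one)
next
  case (Suc n)
  have "a^Suc n * B = a * (a^n*B)" by (simp add: mult.assoc)
  also have "\<dots> = scaleC (l^n) (a*B*d^n)" using Suc by (simp add: mult_scaleC_right mult.assoc)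
  also have "\<dots> = scaleC (l^n) (scaleC l (B*d*d^n))" using assms by (simp add: mult_scaleC_left)
  also have "\<dots> = scaleC (l^Suc n) (B*d^Suc n)" by (simp add: scaleC_scaleC mult.assoc mult.commute)
  finally show ?case .
qed

lemma pow_qcomm_inv:
  fixes a B d :: "'a::complex_banach_algebra_1"
  assumes "a*B = scaleC l (B*d)" "l \<noteq> 0"
  shows "B*d^n = scaleC (inverse l ^ n) (a^n*B)"
  using pow_qcomm[OF assms(1), of n] assms(2)
  by (simp add: scaleC_scaleC power_inverse scaleC_one)

lemma BdC:
  fixes a B C d :: "'a::complex_banach_algebra_1"
  assumes "a*B = scaleC l (B*d)" "l \<noteq> 0" "B*C = 0"
  shows "B*d^n*C = 0"
  using pow_qcomm_inv[OF assms(1,2), of n] assms(3)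
  by (simp add: mult_scaleC_left mult.assoc)


lemma m2_one_mult[simp]: "m2_mult m2_one (M2 a b c d) = M2 a b c (d::'a::ring_1)"
  by (simp add: m2_one_def)

lemma m2_pow_form:
  fixes a B C d :: "'a::complex_banach_algebra_1"
  assumes l: "l \<noteq> 0" and aB: "a*B = scaleC l (B*d)" and dC: "d*C = scaleC l (C*a)"
    and BC: "B*C = 0"
  shows "\<exists>\<beta> \<gamma> \<delta>. m2_pow (M2 a B C d) (n+2) = M2 (a^(n+2)) (scaleC \<beta> (B*d^(n+1)))
      (scaleC \<gamma> (C*a^(n+1))) (d^(n+2) + scaleC \<delta> (C*B*d^n))
     \<and> cmod \<beta> \<le> (real n+2)*(1+cmod l)^(n+2) \<and> cmod \<gamma> \<le> (real n+2)*(1+cmod l)^(n+2)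
     \<and> cmod \<delta> \<le> (real n+2)^2*(1+cmod l)^(2*n+4)"
proof (induction n)
  case 0
  have L1: "1 \<le> 1 + cmod l" by simp
  have p: "m2_pow (M2 a B C d) 2 = M2 (a*a+B*C) (a*B+B*d) (C*a+d*C) (C*B+d*d)"
    by (simp add: numeral_2_eq_2)
  have e12: "a*B+B*d = scaleC (l+1) (B*d)" using aB by (simp add: scaleC_add_left scaleC_one)
  have e21: "C*a+d*C = scaleC (1+l) (C*a)" using dC by (simp add: scaleC_add_left scaleC_one)
  have b1: "cmod (l+1) \<le> 2*(1+cmod l)^2"
  proof -
    have "cmod (l+1) \<le> 1 + cmod l" using norm_triangle_ineq[of l 1] by simp
    also have "\<dots> \<le> (1+cmod l)^2" using mult_left_mono[OF L1, of "1+cmod l"] by (simp add: power2_eq_square)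
    finally show ?thesis by (smt (verit) zero_le_power2)
  qed
  have b2: "cmod (1+l) \<le> 2*(1+cmod l)^2" using b1 by (simp add: add.commute)
  have b3: "cmod (1::complex) \<le> 4*(1+cmod l)^4"
  proof -
    have "1 \<le> (1 + cmod l)^4" using one_le_power[OF L1, of 4] .
    then show ?thesis by (simp only: norm_one)
  qed
  show ?case
    apply (rule exI[of _ "l+1"], rule exI[of _ "1+l"], rule exI[of _ 1])
    using p e12 e21 BC b1 b2 b3 by (simp add: scaleC_one power2_eq_square add.commute)
next
  case (Suc n)
  define L where "L = 1 + cmod l"
  have L1: "1 \<le> L" by (simp add: L_def)
  obtain \<beta> \<gamma> \<delta> where P: "m2_pow (M2 a B C d) (n+2) = M2 (a^(n+2)) (scaleC \<beta> (B*d^(n+1)))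
      (scaleC \<gamma> (C*a^(n+1))) (d^(n+2) + scaleC \<delta> (C*B*d^n))"
    and bb: "cmod \<beta> \<le> (real n+2)*L^(n+2)" and bg: "cmod \<gamma> \<le> (real n+2)*L^(n+2)"
    and bd: "cmod \<delta> \<le> (real n+2)^2*L^(2*n+4)"
    using Suc.IH unfolding L_def by blast
  have aBn: "\<And>m. a^m*B = scaleC (l^m) (B*d^m)" by (rule pow_qcomm[OF aB])
  have dCn: "\<And>m. d^m*C = scaleC (l^m) (C*a^m)" by (rule pow_qcomm[OF dC])
  have BdCn: "\<And>m. B*d^m*C = 0" by (rule BdC[OF aB l BC])
  have E: "m2_pow (M2 a B C d) (Suc n+2) = m2_mult (m2_pow (M2 a B C d) (n+2)) (M2 a B C d)"
    by simp
  have e11: "a^(n+2)*a + scaleC \<beta> (B*d^(n+1))*C = a^(Suc n+2)"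
    using BdCn[of "n+1"] by (simp add: mult_scaleC_left mult.assoc power_Suc2[symmetric])
  have e12: "a^(n+2)*B + scaleC \<beta> (B*d^(n+1))*d = scaleC (l^(n+2)+\<beta>) (B*d^(Suc n+1))"
    using aBn[of "n+2"] by (simp add: mult_scaleC_left scaleC_add_left mult.assoc power_Suc2[symmetric])
  have e21: "scaleC \<gamma> (C*a^(n+1))*a + (d^(n+2) + scaleC \<delta> (C*B*d^n))*C
      = scaleC (\<gamma>+l^(n+2)) (C*a^(Suc n+1))"
  proof -
    have "(d^(n+2) + scaleC \<delta> (C*B*d^n))*C = d^(n+2)*C + scaleC \<delta> (C*(B*d^n*C))"
      by (simp add: distrib_right mult_scaleC_left mult.assoc)
    also have "\<dots> = scaleC (l^(n+2)) (C*a^(n+2))" using dCn[of "n+2"] BdCn[of n] by simp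
    finally show ?thesis
      by (simp add: mult_scaleC_left scaleC_add_left mult.assoc power_Suc2[symmetric])
  qed
  have e22: "scaleC \<gamma> (C*a^(n+1))*B + (d^(n+2) + scaleC \<delta> (C*B*d^n))*d
      = d^(Suc n+2) + scaleC (\<gamma>*l^(n+1)+\<delta>) (C*B*d^(Suc n))"
  proof -
    have "scaleC \<gamma> (C*a^(n+1))*B = scaleC \<gamma> (C*(a^(n+1)*B))"
      by (simp add: mult_scaleC_left mult.assoc)
    also have "\<dots> = scaleC (\<gamma>*l^(n+1)) (C*B*d^(Suc n))"
      using aBn[of "n+1"] by (simp add: mult_scaleC_right scaleC_scaleC mult.assoc)
    finally have 1: "scaleC \<gamma> (C*a^(n+1))*B = scaleC (\<gamma>*l^(n+1)) (C*B*d^(Suc n))" .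
    have 2: "(d^(n+2) + scaleC \<delta> (C*B*d^n))*d = d^(Suc n+2) + scaleC \<delta> (C*B*d^(Suc n))"
      by (simp add: distrib_right mult_scaleC_left mult.assoc power_Suc2[symmetric])
    show ?thesis unfolding 1 2 by (simp add: scaleC_add_left algebra_simps)
  qed
  have cl: "cmod l \<le> L" by (simp add: L_def)
  have clp: "\<And>m. cmod (l^m) \<le> L^m" by (simp add: norm_power power_mono cl)
  have nb1: "cmod (l^(n+2)+\<beta>) \<le> (real (Suc n)+2)*L^(Suc n+2)"
  proof -
    have "cmod (l^(n+2)+\<beta>) \<le> L^(n+2) + (real n+2)*L^(n+2)"
      using norm_triangle_ineq[of "l^(n+2)" \<beta>] clp[of "n+2"] bb by linarith
    also have "\<dots> = (real (Suc n)+2)*L^(n+2)" by (simp add: algebra_simps)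
    also have "\<dots> \<le> (real (Suc n)+2)*L^(Suc n+2)"
      by (intro mult_left_mono power_increasing L1) auto
    finally show ?thesis .
  qed
  have nb2: "cmod (\<gamma>+l^(n+2)) \<le> (real (Suc n)+2)*L^(Suc n+2)"
  proof -
    have "cmod (\<gamma>+l^(n+2)) \<le> L^(n+2) + (real n+2)*L^(n+2)"
      using norm_triangle_ineq[of \<gamma> "l^(n+2)"] clp[of "n+2"] bg by linarith
    also have "\<dots> = (real (Suc n)+2)*L^(n+2)" by (simp add: algebra_simps)
    also have "\<dots> \<le> (real (Suc n)+2)*L^(Suc n+2)"
      by (intro mult_left_mono power_increasing L1) auto
    finally show ?thesis .
  qed
  have nb3: "cmod (\<gamma>*l^(n+1)+\<delta>) \<le> (real (Suc n)+2)^2*L^(2*Suc n+4)"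
  proof -
    have Lp: "0 \<le> L^m" for m using L1 by simp
    have "cmod (\<gamma>*l^(n+1)) \<le> ((real n+2)*L^(n+2))*L^(n+1)"
      unfolding norm_mult using bg clp[of "n+1"] Lp[of "n+2"] by (intro mult_mono) auto
    also have "\<dots> = (real n+2)*(L^(n+2)*L^(n+1))" by (simp add: algebra_simps)
    also have "\<dots> = (real n+2)*L^(2*n+3)"
    proof -
      have ex: "(n+2)+(n+1) = 2*n+3" by simp
      show ?thesis by (simp only: power_add[symmetric] ex)
    qed
    also have "\<dots> \<le> (real n+2)*L^(2*Suc n+4)"
      by (intro mult_left_mono power_increasing L1) auto
    finally have 1: "cmod (\<gamma>*l^(n+1)) \<le> (real n+2)*L^(2*Suc n+4)" .
    have 2: "cmod \<delta> \<le> (real n+2)^2*L^(2*Suc n+4)"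
      using bd order_trans[OF bd mult_left_mono[OF power_increasing[OF _ L1, of "2*n+4" "2*Suc n+4"]]] by simp
    have "cmod (\<gamma>*l^(n+1)+\<delta>) \<le> ((real n+2) + (real n+2)^2)*L^(2*Suc n+4)"
      using 1 2 norm_triangle_ineq[of "\<gamma>*l^(n+1)" \<delta>] by (simp add: algebra_simps)
    also have "\<dots> \<le> (real (Suc n)+2)^2*L^(2*Suc n+4)"
      by (intro mult_right_mono Lp) (simp add: power2_eq_square algebra_simps)
    finally show ?thesis .
  qed
  show ?case
    apply (rule exI[of _ "l^(n+2)+\<beta>"], rule exI[of _ "\<gamma>+l^(n+2)"], rule exI[of _ "\<gamma>*l^(n+1)+\<delta>"])
    using nb1 nb2 nb3 unfolding L_def[symmetric]
    by (simp only: E P m2_mult.simps e11 e12 e21 e22)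
qed


lemma m2_qn:
  fixes a B C d :: "'a::complex_banach_algebra_1"
  assumes l: "l \<noteq> 0" and qa: "quasinilpotent a" and qd: "quasinilpotent d"
    and aB: "a*B = scaleC l (B*d)" and dC: "d*C = scaleC l (C*a)" and BC: "B*C = 0"
  shows "m2_quasinilpotent (M2 a B C d)"
  unfolding m2_quasinilpotent_def
proof (rule root_crit)
  fix n show "0 \<le> m2_norm (m2_pow (M2 a B C d) n)"
    by (cases "m2_pow (M2 a B C d) n") auto
next
  fix e :: real assume e0: "0 < e" and e1: "e \<le> 1"
  define L where "L = 1 + cmod l"
  have L1: "1 \<le> L" by (simp add: L_def)
  have L0: "0 < L" using L1 by simp
  define \<epsilon> where "\<epsilon> = e / L^2"
  have L2: "1 \<le> L^2" using L1 by (simp add: one_le_power)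
  have \<epsilon>0: "0 < \<epsilon>" using e0 L0 by (simp add: \<epsilon>_def)
  have \<epsilon>1: "\<epsilon> \<le> 1" using e1 L2 L0 unfolding \<epsilon>_def by (simp add: divide_le_eq)
  obtain c1 where c1: "c1 > 0" "\<And>m. norm (a^m) \<le> c1 * \<epsilon>^m" using qn_bound[OF qa \<epsilon>0] by blast
  obtain c2 where c2: "c2 > 0" "\<And>m. norm (d^m) \<le> c2 * \<epsilon>^m" using qn_bound[OF qd \<epsilon>0] by blast
  define c where "c = c1 + c2"
  have c0: "c > 0" using c1 c2 by (simp add: c_def)
  have ca: "norm (a^m) \<le> c * \<epsilon>^k" if "k \<le> m" for m k
  proof -
    have "norm (a^m) \<le> c1 * \<epsilon>^m" by (rule c1(2))
    also have "\<dots> \<le> c * \<epsilon>^m" using c2 \<epsilon>0 by (simp add: c_def)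
    also have "\<dots> \<le> c * \<epsilon>^k" using c0 \<epsilon>0 \<epsilon>1 that by (intro mult_left_mono power_decreasing) auto
    finally show ?thesis .
  qed
  have cd: "norm (d^m) \<le> c * \<epsilon>^k" if "k \<le> m" for m k
  proof -
    have "norm (d^m) \<le> c2 * \<epsilon>^m" by (rule c2(2))
    also have "\<dots> \<le> c * \<epsilon>^m" using c1 \<epsilon>0 by (simp add: c_def)
    also have "\<dots> \<le> c * \<epsilon>^k" using c0 \<epsilon>0 \<epsilon>1 that by (intro mult_left_mono power_decreasing) auto
    finally show ?thesis .
  qed
  define W where "W = 2 + norm B + norm C + norm C * norm B"
  have W0: "W > 0" by (simp add: W_def add_pos_nonneg)
  have main: "m2_norm (m2_pow (M2 a B C d) (k+2)) \<le> (W*c/\<epsilon>^2) * real (k+2)^2 * e^(k+2)" for k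
  proof -
    obtain \<beta> \<gamma> \<delta> where P: "m2_pow (M2 a B C d) (k+2) = M2 (a^(k+2)) (scaleC \<beta> (B*d^(k+1)))
      (scaleC \<gamma> (C*a^(k+1))) (d^(k+2) + scaleC \<delta> (C*B*d^k))"
      and bb: "cmod \<beta> \<le> (real k+2)*L^(k+2)" and bg: "cmod \<gamma> \<le> (real k+2)*L^(k+2)"
      and bd: "cmod \<delta> \<le> (real k+2)^2*L^(2*k+4)"
      using m2_pow_form[OF l aB dC BC, of k] unfolding L_def by blast
    define K where "K = (real k+2)^2*L^(2*k+4)"
    define X where "X = c * \<epsilon>^k"
    have X0: "X \<ge> 0" using c0 \<epsilon>0 by (simp add: X_def)
    have K1: "1 \<le> K"
    proof -
      have a1: "1 \<le> (real k+2)^2" by (rule one_le_power) simp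
      have a2: "1 \<le> L^(2*k+4)" using L1 by (rule one_le_power)
      show ?thesis unfolding K_def using mult_mono[OF a1 a2] by simp
    qed
    have Lk: "L^(k+2) \<le> L^(2*k+4)" using L1 by (intro power_increasing) auto
    have kk: "real k + 2 \<le> (real k+2)^2"
    proof -
      have "(real k+2)*1 \<le> (real k+2)*(real k+2)" by (intro mult_left_mono) auto
      then show ?thesis by (simp add: power2_eq_square)
    qed
    have KK: "(real k+2)*L^(k+2) \<le> K" unfolding K_def
      using kk Lk L0 by (intro mult_mono) auto
    have bb': "cmod \<beta> \<le> K" using bb KK by linarith
    have bg': "cmod \<gamma> \<le> K" using bg KK by linarith
    have h1: "norm (a^(k+2)) \<le> X" unfolding X_def by (rule ca) simp
    have h2: "norm (scaleC \<beta> (B*d^(k+1))) \<le> K * norm B * X"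
    proof -
      have "norm (B*d^(k+1)) \<le> norm B * norm (d^(k+1))" by (rule norm_mult_ineq)
      also have "\<dots> \<le> norm B * X" unfolding X_def by (intro mult_left_mono cd) auto
      finally have 1: "norm (B*d^(k+1)) \<le> norm B * X" .
      have "cmod \<beta> * norm (B*d^(k+1)) \<le> K * (norm B * X)"
        using bb' 1 X0 K1 by (intro mult_mono) auto
      then show ?thesis unfolding norm_scaleC by (simp add: mult.assoc)
    qed
    have h3: "norm (scaleC \<gamma> (C*a^(k+1))) \<le> K * norm C * X"
    proof -
      have "norm (C*a^(k+1)) \<le> norm C * norm (a^(k+1))" by (rule norm_mult_ineq)
      also have "\<dots> \<le> norm C * X" unfolding X_def by (intro mult_left_mono ca) auto
      finally have 1: "norm (C*a^(k+1)) \<le> norm C * X" .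
      have "cmod \<gamma> * norm (C*a^(k+1)) \<le> K * (norm C * X)"
        using bg' 1 X0 K1 by (intro mult_mono) auto
      then show ?thesis unfolding norm_scaleC by (simp add: mult.assoc)
    qed
    have h4: "norm (d^(k+2) + scaleC \<delta> (C*B*d^k)) \<le> X + K * (norm C * norm B) * X"
    proof -
      have "norm (C*B*d^k) \<le> norm (C*B) * norm (d^k)" by (rule norm_mult_ineq)
      also have "\<dots> \<le> (norm C * norm B) * X" unfolding X_def
        using norm_mult_ineq[of C B] by (intro mult_mono cd) auto
      finally have 1: "norm (C*B*d^k) \<le> norm C * norm B * X" .
      have "cmod \<delta> * norm (C*B*d^k) \<le> K * (norm C * norm B * X)"
        using bd 1 X0 K1 unfolding K_def[symmetric] by (intro mult_mono) auto
      then have "norm (scaleC \<delta> (C*B*d^k)) \<le> K * (norm C * norm B) * X"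
        unfolding norm_scaleC by (simp add: mult.assoc)
      moreover have "norm (d^(k+2)) \<le> X" unfolding X_def by (rule cd) simp
      ultimately show ?thesis using norm_triangle_ineq[of "d^(k+2)" "scaleC \<delta> (C*B*d^k)"] by linarith
    qed
    have "m2_norm (m2_pow (M2 a B C d) (k+2)) \<le> X + K * norm B * X + K * norm C * X + (X + K * (norm C * norm B) * X)"
      unfolding P m2_norm.simps using h1 h2 h3 h4 by linarith
    also have "\<dots> = (2 + K * (norm B + norm C + norm C * norm B)) * X" by (simp add: algebra_simps)
    also have "\<dots> \<le> (K * W) * X"
      using K1 X0 unfolding W_def by (intro mult_right_mono) (auto simp: algebra_simps)
    also have "\<dots> = (W*c/\<epsilon>^2) * real (k+2)^2 * e^(k+2)"
    proof -
      have "e^(k+2) = (L^2*\<epsilon>)^(k+2)" using L0 by (simp add: \<epsilon>_def)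
      also have "\<dots> = L^(2*k+4) * \<epsilon>^k * \<epsilon>^2"
      proof -
        have ex: "2*(k+2) = 2*k+4" by simp
        have "(L^2*\<epsilon>)^(k+2) = L^(2*(k+2)) * (\<epsilon>^k * \<epsilon>^2)"
          by (simp only: power_mult_distrib power_mult[symmetric]) (simp only: power_add)
        then show ?thesis by (simp only: ex mult.assoc)
      qed
      finally have "e^(k+2) = L^(2*k+4) * \<epsilon>^k * \<epsilon>^2" .
      then show ?thesis using \<epsilon>0 unfolding K_def X_def
        by (simp add: field_simps)
    qed
    finally show ?thesis .
  qed
  show "\<exists>c>0. \<forall>n\<ge>2. m2_norm (m2_pow (M2 a B C d) n) \<le> c * real n ^ 2 * e ^ n"
  proof (intro exI conjI allI impI)
    show "W*c/\<epsilon>^2 > 0" using W0 c0 \<epsilon>0 by simp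
    fix n :: nat assume "2 \<le> n"
    then obtain k where "n = k+2" using le_Suc_ex by (metis add.commute)
    then show "m2_norm (m2_pow (M2 a B C d) n) \<le> (W*c/\<epsilon>^2) * real n ^ 2 * e ^ n"
      using main[of k] by simp
  qed
qed


lemma gd_pow:
  fixes d dd :: "'a::complex_banach_algebra_1"
  assumes "is_gdrazin d dd"
  shows "d^n * dd^(n+1) = dd"
proof -
  have c: "dd*d = d*dd" and i: "dd = dd*d*dd" using assms by (auto simp: is_gdrazin_def)
  have ddd: "d*dd*dd = dd" using c i by (simp add: mult.assoc)
  show ?thesis
  proof (induction n)
    case 0 then show ?case by simp
  next
    case (Suc n)
    have p1: "d^Suc n = d^n*d" by (rule power_Suc2)
    have p2: "dd^(Suc n+1) = dd*(dd*dd^n)" by simp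
    have "d^Suc n * dd^(Suc n+1) = d^n * (d*dd*dd*dd^n)"
      by (simp only: p1 p2 mult.assoc)
    also have "\<dots> = d^n * dd^(n+1)" using ddd by simp
    finally show ?case using Suc by simp
  qed
qed

lemma kill:
  fixes a B d dd :: "'a::complex_banach_algebra_1"
  assumes l: "l \<noteq> 0" and qa: "quasinilpotent a" and aB: "a*B = scaleC l (B*d)"
    and g: "is_gdrazin d dd"
  shows "B*dd = 0"
proof -
  define D1 where "D1 = norm dd + 1"
  have D10: "D1 > 0" by (simp add: D1_def add_nonneg_pos)
  define \<epsilon> where "\<epsilon> = cmod l / (2*D1)"
  have l0: "cmod l > 0" using l by simp
  have \<epsilon>0: "\<epsilon> > 0" using l0 D10 by (simp add: \<epsilon>_def)
  obtain c where c: "c > 0" "\<And>m. norm (a^m) \<le> c * \<epsilon>^m" using qn_bound[OF qa \<epsilon>0] by blast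
  have "norm (B*dd) \<le> (c * norm B * D1) * (1/2)^n" for n
  proof -
    have "B*dd = (B*d^n) * dd^(n+1)" using gd_pow[OF g, of n] by (simp add: mult.assoc)
    also have "\<dots> = scaleC (inverse l ^ n) (a^n*B*dd^(n+1))"
      using pow_qcomm_inv[OF aB l, of n] by (simp add: mult_scaleC_left)
    finally have E: "B*dd = scaleC (inverse l ^ n) (a^n*B*dd^(n+1))" .
    have n1: "norm (a^n*B*dd^(n+1)) \<le> (c * \<epsilon>^n * norm B) * D1^(n+1)"
    proof -
      have "norm (a^n*B*dd^(n+1)) \<le> norm (a^n*B) * norm (dd^(n+1))" by (rule norm_mult_ineq)
      also have "\<dots> \<le> (norm (a^n) * norm B) * norm (dd^(n+1))"
        by (intro mult_right_mono norm_mult_ineq) auto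
      also have "\<dots> \<le> (c * \<epsilon>^n * norm B) * D1^(n+1)"
      proof -
        have X: "norm (a^n) * norm B \<le> c * \<epsilon>^n * norm B" by (intro mult_right_mono c(2)) auto
        have "norm (dd^(n+1)) \<le> norm dd^(n+1)" by (rule norm_power_ineq)
        also have "\<dots> \<le> D1^(n+1)" by (intro power_mono) (auto simp: D1_def)
        finally have Y: "norm (dd^(n+1)) \<le> D1^(n+1)" .
        show ?thesis by (rule mult_mono[OF X Y]) (use c \<epsilon>0 in auto)
      qed
      finally show ?thesis .
    qed
    have "norm (B*dd) = (1/cmod l)^n * norm (a^n*B*dd^(n+1))"
    proof -
      have "cmod (inverse l ^ n) = (1/cmod l)^n" by (simp add: norm_power norm_inverse power_one_over power_inverse divide_inverse)
      then show ?thesis by (simp add: E norm_scaleC)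
    qed
    also have "\<dots> \<le> (1/cmod l)^n * ((c * \<epsilon>^n * norm B) * D1^(n+1))"
      using n1 by (intro mult_left_mono) auto
    also have "\<dots> = (c * norm B * D1) * ((1/cmod l) * \<epsilon> * D1)^n"
    proof -
      have pe: "((1/cmod l) * \<epsilon> * D1)^n = (1/cmod l)^n * \<epsilon>^n * D1^n" by (simp only: power_mult_distrib)
      have pd: "D1^(n+1) = D1^n*D1" by simp
      show ?thesis unfolding pe pd by (simp only: mult.assoc mult.commute mult.left_commute)
    qed
    also have "(1/cmod l) * \<epsilon> * D1 = 1/2" using l0 D10 by (simp add: \<epsilon>_def)
    finally show ?thesis .
  qed
  then have "norm (B*dd) \<le> 0" by (intro geom_zero)
  then show ?thesis by simp
qed


theorem theorem4p3:
  fixes A B C D Ad Dd :: "'a::complex_banach_algebra_1" and lam :: complex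
  assumes "lam \<noteq> 0"
    and "is_gdrazin A Ad" and "is_gdrazin D Dd"
    and "A * B = scaleC lam (spec_idem A Ad * B * D)"
    and "D * C = scaleC lam (spec_idem D Dd * C * A)"
    and "B * C = 0"
  shows "\<exists>S. m2_sums (\<lambda>n. m2_mult (m2_pow (M2 A B C D) n)
                              (M2 0 (B * Dd ^ (n + 2)) (C * Ad ^ (n + 2)) 0)) S
           \<and> m2_is_gdrazin (M2 A B C D) (m2_add (M2 Ad 0 0 Dd) S)"
proof -
  note l = assms(1)
  have cA: "Ad*A = A*Ad" and iA: "Ad = Ad*A*Ad" and qA: "quasinilpotent (A - A\<^sup>2*Ad)"
    using assms(2) by (auto simp: is_gdrazin_def)
  have cD: "Dd*D = D*Dd" and iD: "Dd = Dd*D*Dd" and qD: "quasinilpotent (D - D\<^sup>2*Dd)"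
    using assms(3) by (auto simp: is_gdrazin_def)
  have AdP: "Ad * spec_idem A Ad = 0"
    by (simp add: spec_idem_def right_diff_distrib mult.assoc[symmetric] iA[symmetric])
  have DdQ: "Dd * spec_idem D Dd = 0"
    by (simp add: spec_idem_def right_diff_distrib mult.assoc[symmetric] iD[symmetric])
  have AdAB: "Ad*A*B = 0"
  proof -
    have "Ad*A*B = Ad*(A*B)" by (simp add: mult.assoc)
    also have "\<dots> = scaleC lam (Ad * spec_idem A Ad * B * D)"
      using assms(4) by (simp add: mult_scaleC_right mult.assoc)
    finally show ?thesis using AdP by simp
  qed
  have DdDC: "Dd*D*C = 0"
  proof -
    have "Dd*D*C = Dd*(D*C)" by (simp add: mult.assoc)
    also have "\<dots> = scaleC lam (Dd * spec_idem D Dd * C * A)"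
      using assms(5) by (simp add: mult_scaleC_right mult.assoc)
    finally show ?thesis using DdQ by simp
  qed
  have PB: "spec_idem A Ad * B = B" using AdAB cA by (simp add: spec_idem_def left_diff_distrib)
  have QC: "spec_idem D Dd * C = C" using DdDC cD by (simp add: spec_idem_def left_diff_distrib)
  have AB: "A*B = scaleC lam (B*D)" using assms(4) PB by simp
  have DC: "D*C = scaleC lam (C*A)" using assms(5) QC by simp
  define a where "a = A - A\<^sup>2*Ad"
  define d where "d = D - D\<^sup>2*Dd"
  have A2B: "A\<^sup>2*Ad*B = 0" using AdAB cA by (simp add: power2_eq_square mult.assoc)
  have D2C: "D\<^sup>2*Dd*C = 0" using DdDC cD by (simp add: power2_eq_square mult.assoc)
  have aB: "a*B = scaleC lam (B*D)" unfolding a_def using AB A2B by (simp add: left_diff_distrib)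
  have dC: "d*C = scaleC lam (C*A)" unfolding d_def using DC D2C by (simp add: left_diff_distrib)
  have BDd: "B*Dd = 0" by (rule kill[OF l qA[folded a_def] aB assms(3)])
  have CAd: "C*Ad = 0" by (rule kill[OF l qD[folded d_def] dC assms(2)])
  have AdB: "Ad*B = 0" using iA AdAB cA by (metis mult.assoc mult_zero_right)
  have DdC: "Dd*C = 0" using iD DdDC cD by (metis mult.assoc mult_zero_right)
  have Bd: "B*d = B*D"
  proof -
    have "B*(D\<^sup>2*Dd) = B*Dd*D\<^sup>2"
      using cD by (simp add: power2_eq_square mult.assoc) (metis mult.assoc)
    then show ?thesis unfolding d_def using BDd by (simp add: right_diff_distrib)
  qed
  have Ca: "C*a = C*A"
  proof -
    have "C*(A\<^sup>2*Ad) = C*Ad*A\<^sup>2"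
      using cA by (simp add: power2_eq_square mult.assoc) (metis mult.assoc)
    then show ?thesis unfolding a_def using CAd by (simp add: right_diff_distrib)
  qed
  have qN: "m2_quasinilpotent (M2 a B C d)"
    by (rule m2_qn[OF l qA[folded a_def] qD[folded d_def]]) (use aB Bd dC Ca assms(6) in auto)
  have zero: "\<And>n. m2_mult (m2_pow (M2 A B C D) n) (M2 0 (B * Dd ^ (n + 2)) (C * Ad ^ (n + 2)) 0) = M2 0 0 0 0"
  proof -
    fix n
    have "B * Dd ^ (n + 2) = 0" using BDd by (simp add: mult.assoc[symmetric])
    moreover have "C * Ad ^ (n + 2) = 0" using CAd by (simp add: mult.assoc[symmetric])
    ultimately show "m2_mult (m2_pow (M2 A B C D) n) (M2 0 (B * Dd ^ (n + 2)) (C * Ad ^ (n + 2)) 0) = M2 0 0 0 0"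
      by (cases "m2_pow (M2 A B C D) n") simp
  qed
  show ?thesis
  proof (intro exI conjI)
    show "m2_sums (\<lambda>n. m2_mult (m2_pow (M2 A B C D) n)
                              (M2 0 (B * Dd ^ (n + 2)) (C * Ad ^ (n + 2)) 0)) (M2 0 0 0 0)"
      unfolding zero m2_sums_def by simp
    have X: "m2_add (M2 Ad 0 0 Dd) (M2 0 0 0 0) = M2 Ad 0 0 Dd" by simp
    have P2: "m2_pow (M2 A B C D) 2 = M2 (A*A+B*C) (A*B+B*D) (C*A+D*C) (C*B+D*D)"
      by (simp add: numeral_2_eq_2 m2_one_def)
    show "m2_is_gdrazin (M2 A B C D) (m2_add (M2 Ad 0 0 Dd) (M2 0 0 0 0))"
      unfolding X m2_is_gdrazin_def
    proof (intro conjI)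
      show "m2_mult (M2 Ad 0 0 Dd) (M2 A B C D) = m2_mult (M2 A B C D) (M2 Ad 0 0 Dd)"
        using AdB DdC BDd CAd cA cD by simp
      show "M2 Ad 0 0 Dd = m2_mult (m2_mult (M2 Ad 0 0 Dd) (M2 A B C D)) (M2 Ad 0 0 Dd)"
        using AdB DdC iA iD by simp
      have N: "m2_diff (M2 A B C D) (m2_mult (m2_pow (M2 A B C D) 2) (M2 Ad 0 0 Dd)) = M2 a B C d"
      proof -
        have e12: "(A*B+B*D)*Dd = 0"
        proof -
          have "(A*B+B*D)*Dd = A*(B*Dd) + B*Dd*D" using cD by (simp add: distrib_right mult.assoc)
          then show ?thesis using BDd by simp
        qed
        have e21: "(C*A+D*C)*Ad = 0"
        proof -
          have "(C*A+D*C)*Ad = C*Ad*A + D*(C*Ad)" using cA by (simp add: distrib_right mult.assoc)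
          then show ?thesis using CAd by simp
        qed
        have e11: "(A*A+B*C)*Ad = A\<^sup>2*Ad" using assms(6) by (simp add: power2_eq_square)
        have e22: "(C*B+D*D)*Dd = D\<^sup>2*Dd"
        proof -
          have "(C*B+D*D)*Dd = C*(B*Dd) + D*D*Dd" by (simp add: distrib_right mult.assoc)
          then show ?thesis using BDd by (simp add: power2_eq_square)
        qed
        show ?thesis unfolding P2 a_def d_def using e11 e12 e21 e22 by simp
      qed
      show "m2_quasinilpotent (m2_diff (M2 A B C D) (m2_mult (m2_pow (M2 A B C D) 2) (M2 Ad 0 0 Dd)))"
        unfolding N by (rule qN)
    qed
  qed
qed

end
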